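(* Let $g$ be a Riemannian metric on an open set of $\mathbb R^n$, $n\ge3$, with $g_{jk}\in C^r_*$, $r>1$, and $|g|=\det(g_{jk})=1$. Then the principal symbol $\sigma(W_{abcd})$ of the linearization at $g$ of the Weyl tensor satisfies, for every symmetric matrix $h$ and covector $\xi$, $$\xi^a\xi^d\sigma(W_{abcd})h=\frac{n-3}{2(n-2)}\Big[|\xi|^4h_{bc}-|\xi|^2\big(\xi_b\sigma(-i\Gamma_c)h+\xi_c\sigma(-i\Gamma_b)h\big)+\frac{n-2}{n-1}\xi_b\xi_c\xi_l\sigma(-i\Gamma^l)h+\frac1{n-1}|\xi|^2\big(\xi_l\sigma(-i\Gamma^l)h\big)g_{bc}\Big].$$
   Context: $C^r_*$ is the local Zygmund space. For a nonlinear differential operator $T=T(g)$ acting on metrics, $\sigma(T)$ denotes the principal symbol of its linearization at $g$, applied to a symmetric matrix $h$. Indices are raised and lowered and $|\xi|$ is computed with $g$. $\Gamma^k_{ab}=\frac12g^{kl}(\partial_ag_{bl}+\partial_bg_{al}-\partial_lg_{ab})$, $\Gamma^k=g^{ab}\Gamma^k_{ab}$, $\Gamma_k=g_{kl}\Gamma^l$. Curvature: $R_{abcd}=\langle(\nabla_a\nabla_b-\nabla_b\nabla_a)\partial_c,\partial_d\rangle$ (in coordinates, as distributions for low regularity), $R_{bc}=R_{abc}{}^a$, $R=g^{bc}R_{bc}$, $P_{ab}=\frac1{n-2}(R_{ab}-\frac{R}{2(n-1)}g_{ab})$, $W_{abcd}=R_{abcd}+P_{ac}g_{bd}-P_{b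c}g_{ad}+P_{bd}g_{ac}-P_{ad}g_{bc}$.
   Formalization: The identity is asserted only for symmetric matrices h whose trace with respect to g vanishes, that is, for variations tangent to the metrics with |g|=1, rather than for every symmetric matrix h. The statement above fails without it. *)

theory Defs
  imports "HOL-Analysis.Analysis"
begin

text \<open>
  Pointwise (jet) model of a metric on an open subset of R^n, indices ranging over
  a finite type 'n with CARD('n) = n.  At a point x we record the 2-jet of g:
    g  :: real^'n^'n        the values g_{ab}(x)   (g $ a $ b)
    G1 a b c                the first derivatives \<partial>_c g_{ab}(x)
    G2 a b c d              the second derivatives \<partial>_c \<partial>_d g_{ab}(x)
  The curvature tensors are the coordinate expressions in this 2-jet, exactly as in
  the paper's conventions.
\<close>

type_synonym 'n jet1 = "'n \<Rightarrow> 'n \<Rightarrow> 'n \<Rightarrow> real"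
type_synonym 'n jet2 = "'n \<Rightarrow> 'n \<Rightarrow> 'n \<Rightarrow> 'n \<Rightarrow> real"

definition ginv :: "real^'n^'n \<Rightarrow> 'n::finite \<Rightarrow> 'n \<Rightarrow> real" where
  "ginv g a b = matrix_inv g $ a $ b"

definition dginv :: "real^'n^'n \<Rightarrow> 'n jet1 \<Rightarrow> 'n::finite \<Rightarrow> 'n \<Rightarrow> 'n \<Rightarrow> real" where
  "dginv g G1 k l c = - (\<Sum>p\<in>UNIV. \<Sum>q\<in>UNIV. ginv g k p * G1 p q c * ginv g q l)"

definition Chr :: "real^'n^'n \<Rightarrow> 'n jet1 \<Rightarrow> 'n::finite \<Rightarrow> 'n \<Rightarrow> 'n \<Rightarrow> real" where
  "Chr g G1 k a b = (1/2) * (\<Sum>l\<in>UNIV. ginv g k l * (G1 b l a + G1 a l b - G1 a b l))"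

definition dChr :: "real^'n^'n \<Rightarrow> 'n jet1 \<Rightarrow> 'n jet2 \<Rightarrow> 'n::finite \<Rightarrow> 'n \<Rightarrow> 'n \<Rightarrow> 'n \<Rightarrow> real" where
  "dChr g G1 G2 k a b c = (1/2) * (\<Sum>l\<in>UNIV.
      dginv g G1 k l c * (G1 b l a + G1 a l b - G1 a b l)
    + ginv g k l * (G2 b l a c + G2 a l b c - G2 a b l c))"

definition Gam_up :: "real^'n^'n \<Rightarrow> 'n jet1 \<Rightarrow> 'n::finite \<Rightarrow> real" where
  "Gam_up g G1 k = (\<Sum>a\<in>UNIV. \<Sum>b\<in>UNIV. ginv g a b * Chr g G1 k a b)"

definition Gam_down :: "real^'n^'n \<Rightarrow> 'n jet1 \<Rightarrow> 'n::finite \<Rightarrow> real" where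
  "Gam_down g G1 k = (\<Sum>l\<in>UNIV. g $ k $ l * Gam_up g G1 l)"

text \<open>R_{abc}^d, with (\<nabla>_a\<nabla>_b - \<nabla>_b\<nabla>_a)\<partial>_c = R_{abc}^d \<partial>_d\<close>
definition Riem_up :: "real^'n^'n \<Rightarrow> 'n jet1 \<Rightarrow> 'n jet2 \<Rightarrow> 'n::finite \<Rightarrow> 'n \<Rightarrow> 'n \<Rightarrow> 'n \<Rightarrow> real" where
  "Riem_up g G1 G2 a b c d = dChr g G1 G2 d b c a - dChr g G1 G2 d a c b
     + (\<Sum>e\<in>UNIV. Chr g G1 e b c * Chr g G1 d a e - Chr g G1 e a c * Chr g G1 d b e)"

definition Riem :: "real^'n^'n \<Rightarrow> 'n jet1 \<Rightarrow> 'n jet2 \<Rightarrow> 'n::finite \<Rightarrow> 'n \<Rightarrow> 'n \<Rightarrow> 'n \<Rightarrow> real" where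
  "Riem g G1 G2 a b c d = (\<Sum>e\<in>UNIV. Riem_up g G1 G2 a b c e * g $ e $ d)"

definition Ric :: "real^'n^'n \<Rightarrow> 'n jet1 \<Rightarrow> 'n jet2 \<Rightarrow> 'n::finite \<Rightarrow> 'n \<Rightarrow> real" where
  "Ric g G1 G2 b c = (\<Sum>a\<in>UNIV. Riem_up g G1 G2 a b c a)"

definition Scal :: "real^'n^'n \<Rightarrow> 'n jet1 \<Rightarrow> 'n::finite jet2 \<Rightarrow> real" where
  "Scal g G1 G2 = (\<Sum>b\<in>UNIV. \<Sum>c\<in>UNIV. ginv g b c * Ric g G1 G2 b c)"

definition Schouten :: "real^'n^'n \<Rightarrow> 'n jet1 \<Rightarrow> 'n jet2 \<Rightarrow> 'n::finite \<Rightarrow> 'n \<Rightarrow> real" where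
  "Schouten g G1 G2 a b = (1 / (real CARD('n) - 2)) *
     (Ric g G1 G2 a b - Scal g G1 G2 / (2 * (real CARD('n) - 1)) * g $ a $ b)"

definition Weyl :: "real^'n^'n \<Rightarrow> 'n jet1 \<Rightarrow> 'n jet2 \<Rightarrow> 'n::finite \<Rightarrow> 'n \<Rightarrow> 'n \<Rightarrow> 'n \<Rightarrow> real" where
  "Weyl g G1 G2 a b c d = Riem g G1 G2 a b c d
     + Schouten g G1 G2 a c * g $ b $ d - Schouten g G1 G2 b c * g $ a $ d
     + Schouten g G1 G2 b d * g $ a $ c - Schouten g G1 G2 a d * g $ b $ c"

text \<open>
  For a second-order operator T(g), whose value
  at a point is a function of the 2-jet, the principal symbol of its linearization at g
  is  \<sigma>(T)h = \<Sum> (\<partial>T/\<partial>(\<partial>_c\<partial>_d g_{ab})) (i\<xi>_c)(i\<xi>_d) h_{ab},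
  i.e. the directional derivative of T in the second-jet slot in direction -\<xi>_c\<xi>_d h_{ab}.
  For a first-order operator T(g) (function of the 1-jet), \<sigma>(-iT)h =
  -i \<Sum> (\<partial>T/\<partial>(\<partial>_c g_{ab})) (i\<xi>_c) h_{ab}, the directional derivative of T in the
  first-jet slot in direction \<xi>_c h_{ab}.
\<close>
definition psym2 :: "(real^'n^'n \<Rightarrow> 'n jet1 \<Rightarrow> 'n jet2 \<Rightarrow> real)
    \<Rightarrow> real^'n^'n \<Rightarrow> 'n jet1 \<Rightarrow> 'n jet2 \<Rightarrow> real^'n \<Rightarrow> real^'n^'n \<Rightarrow> real" where
  "psym2 T g G1 G2 \<xi> h =
     deriv (\<lambda>t. T g G1 (\<lambda>a b c d. G2 a b c d + t * (- (\<xi> $ c * \<xi> $ d * h $ a $ b)))) 0"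

definition psym1_negi :: "(real^'n^'n \<Rightarrow> 'n jet1 \<Rightarrow> real)
    \<Rightarrow> real^'n^'n \<Rightarrow> 'n jet1 \<Rightarrow> real^'n \<Rightarrow> real^'n^'n \<Rightarrow> real" where
  "psym1_negi T g G1 \<xi> h =
     deriv (\<lambda>t. T g (\<lambda>a b c. G1 a b c + t * (\<xi> $ c * h $ a $ b))) 0"

definition raise :: "real^'n^'n \<Rightarrow> real^'n \<Rightarrow> 'n::finite \<Rightarrow> real" where
  "raise g \<xi> a = (\<Sum>b\<in>UNIV. ginv g a b * \<xi> $ b)"

definition gnorm2 :: "real^'n^'n \<Rightarrow> real^'n::finite \<Rightarrow> real" where
  "gnorm2 g \<xi> = (\<Sum>a\<in>UNIV. \<Sum>b\<in>UNIV. ginv g a b * \<xi> $ a * \<xi> $ b)"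

end

theory Submission
  imports Defs
begin


lemma ginv_facts:
  fixes g :: "real^'n::finite^'n"
  assumes "transpose g = g" "det g = 1"
  shows "matrix_inv g ** g = mat 1" "g ** matrix_inv g = mat 1" "transpose (matrix_inv g) = matrix_inv g"
proof -
  have "invertible g" unfolding invertible_det_nz using assms(2) by simp
  then have *: "g ** matrix_inv g = mat 1 \<and> matrix_inv g ** g = mat 1"
    unfolding invertible_def matrix_inv_def by (rule someI_ex)
  then show a: "matrix_inv g ** g = mat 1" "g ** matrix_inv g = mat 1" by auto
  have "transpose (matrix_inv g) ** g = mat 1"
    using arg_cong[OF a(2), of transpose] assms(1) by (simp add: matrix_transpose_mul)
  have "transpose (matrix_inv g) = (transpose (matrix_inv g) ** g) ** matrix_inv g"
    by (simp add: a matrix_mul_assoc[symmetric])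
  then show "transpose (matrix_inv g) = matrix_inv g" using \<open>transpose (matrix_inv g) ** g = mat 1\<close> by simp
qed

lemma ginv_sym: assumes "transpose g = g" "det g = 1" shows "ginv g a b = ginv g b a"
  using arg_cong[OF ginv_facts(3)[OF assms], of "\<lambda>M. M $ b $ a"] unfolding ginv_def
  by (simp add: transpose_def)

lemma ginv_left: assumes "transpose g = g" "det g = 1"
  shows "(\<Sum>e\<in>UNIV. ginv g a e * g $ e $ b) = (if a = b then 1 else 0)"
  using arg_cong[OF ginv_facts(1)[OF assms], of "\<lambda>M. M $ a $ b"]
  unfolding ginv_def by (simp add: matrix_matrix_mult_def mat_def)

lemma ginv_right: assumes "transpose g = g" "det g = 1"
  shows "(\<Sum>e\<in>UNIV. g $ a $ e * ginv g e b) = (if a = b then 1 else 0)"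
  using arg_cong[OF ginv_facts(2)[OF assms], of "\<lambda>M. M $ a $ b"]
  unfolding ginv_def by (simp add: matrix_matrix_mult_def mat_def)


lemma deriv_affine: assumes "\<And>t. f t = A + t * (B::real)" shows "deriv f 0 = B"
proof -
  have "f = (\<lambda>t. A + t * B)" using assms by auto
  moreover have "((\<lambda>t. A + t * B) has_real_derivative B) (at 0)"
    by (auto intro!: derivative_eq_intros)
  ultimately show ?thesis using DERIV_imp_deriv by auto
qed


definition addj2 :: "'n jet2 \<Rightarrow> real \<Rightarrow> 'n jet2 \<Rightarrow> 'n jet2" where
  "addj2 G2 t X = (\<lambda>a b c d. G2 a b c d + t * X a b c d)"

definition dChrL :: "real^'n^'n \<Rightarrow> 'n jet2 \<Rightarrow> 'n::finite \<Rightarrow> 'n \<Rightarrow> 'n \<Rightarrow> 'n \<Rightarrow> real" where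
  "dChrL g X k a b c = (1/2) * (\<Sum>l\<in>UNIV. ginv g k l * (X b l a c + X a l b c - X a b l c))"

lemma dChr_lin: "dChr g G1 (addj2 G2 t X) k a b c = dChr g G1 G2 k a b c + t * dChrL g X k a b c"
  unfolding dChr_def dChrL_def addj2_def
  apply (simp only: sum_distrib_left sum.distrib[symmetric])
  by (rule sum.cong) (auto simp: algebra_simps)

definition RuL where "RuL g X a b c d = dChrL g X d b c a - dChrL g X d a c b"

lemma Ru_lin: "Riem_up g G1 (addj2 G2 t X) a b c d = Riem_up g G1 G2 a b c d + t * RuL g X a b c d"
  unfolding Riem_up_def RuL_def dChr_lin by (simp add: algebra_simps)

definition RL where "RL g X a b c d = (\<Sum>e\<in>UNIV. RuL g X a b c e * g $ e $ d)"

lemma R_lin: "Riem g G1 (addj2 G2 t X) a b c d = Riem g G1 G2 a b c d + t * RL g X a b c d"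
  unfolding Riem_def RL_def Ru_lin by (simp add: algebra_simps sum.distrib sum_distrib_left)

definition RicL where "RicL g X b c = (\<Sum>a\<in>UNIV. RuL g X a b c a)"

lemma Ric_lin: "Ric g G1 (addj2 G2 t X) b c = Ric g G1 G2 b c + t * RicL g X b c"
  unfolding Ric_def RicL_def Ru_lin by (simp add: algebra_simps sum.distrib sum_distrib_left)

definition ScalL :: "real^'n^'n \<Rightarrow> 'n jet2 \<Rightarrow> real" where
  "ScalL g X = (\<Sum>b\<in>UNIV. \<Sum>c\<in>UNIV. ginv g b c * RicL g X b c)"

lemma Scal_lin: "Scal g G1 (addj2 G2 t X) = Scal g G1 G2 + t * ScalL g X"
  unfolding Scal_def ScalL_def Ric_lin by (simp add: algebra_simps sum.distrib sum_distrib_left)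

definition SchL :: "real^'n^'n \<Rightarrow> 'n jet2 \<Rightarrow> 'n::finite \<Rightarrow> 'n \<Rightarrow> real" where
  "SchL g X a b = (1 / (real CARD('n) - 2)) *
     (RicL g X a b - ScalL g X / (2 * (real CARD('n) - 1)) * g $ a $ b)"

lemma Sch_lin: "Schouten g G1 (addj2 G2 t X) a b = Schouten g G1 G2 a b + t * SchL g X a b"
  unfolding Schouten_def SchL_def Ric_lin Scal_lin by (simp add: algebra_simps add_divide_distrib diff_divide_distrib)

definition WL where "WL g X a b c d = RL g X a b c d
     + SchL g X a c * g $ b $ d - SchL g X b c * g $ a $ d
     + SchL g X b d * g $ a $ c - SchL g X a d * g $ b $ c"

lemma W_lin: "Weyl g G1 (addj2 G2 t X) a b c d = Weyl g G1 G2 a b c d + t * WL g X a b c d"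
  unfolding Weyl_def WL_def R_lin Sch_lin by (simp add: algebra_simps)

definition ChrL :: "real^'n^'n \<Rightarrow> 'n jet1 \<Rightarrow> 'n::finite \<Rightarrow> 'n \<Rightarrow> 'n \<Rightarrow> real" where
  "ChrL g K k a b = (1/2) * (\<Sum>l\<in>UNIV. ginv g k l * (K b l a + K a l b - K a b l))"

lemma Chr_lin: "Chr g (\<lambda>a b c. G1 a b c + t * K a b c) k a b = Chr g G1 k a b + t * ChrL g K k a b"
  unfolding Chr_def ChrL_def
  apply (simp only: sum_distrib_left sum.distrib[symmetric])
  by (rule sum.cong) (auto simp: algebra_simps)

definition GuL :: "real^'n^'n \<Rightarrow> 'n jet1 \<Rightarrow> 'n::finite \<Rightarrow> real" where
  "GuL g K k = (\<Sum>a\<in>UNIV. \<Sum>b\<in>UNIV. ginv g a b * ChrL g K k a b)"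

lemma Gu_lin: "Gam_up g (\<lambda>a b c. G1 a b c + t * K a b c) k = Gam_up g G1 k + t * GuL g K k"
  unfolding Gam_up_def GuL_def Chr_lin by (simp add: algebra_simps sum.distrib sum_distrib_left)

lemma Gd_lin: "Gam_down g (\<lambda>a b c. G1 a b c + t * K a b c) k = Gam_down g G1 k + t * (\<Sum>l\<in>UNIV. g $ k $ l * GuL g K l)"
  unfolding Gam_down_def Gu_lin by (simp add: algebra_simps sum.distrib sum_distrib_left)

lemma psymW: "psym2 (\<lambda>g' G1' G2'. Weyl g' G1' G2' a b c d) g G1 G2 \<xi> h
   = WL g (\<lambda>a b c d. - (\<xi> $ c * \<xi> $ d * h $ a $ b)) a b c d"
  unfolding psym2_def
  by (rule deriv_affine) (rule W_lin[unfolded addj2_def])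

lemma psymGu: "psym1_negi (\<lambda>g' G1'. Gam_up g' G1' l) g G1 \<xi> h = GuL g (\<lambda>a b c. \<xi> $ c * h $ a $ b) l"
  unfolding psym1_negi_def by (rule deriv_affine) (rule Gu_lin)

lemma psymGd: "psym1_negi (\<lambda>g' G1'. Gam_down g' G1' l) g G1 \<xi> h = (\<Sum>m\<in>UNIV. g $ l $ m * GuL g (\<lambda>a b c. \<xi> $ c * h $ a $ b) m)"
  unfolding psym1_negi_def by (rule deriv_affine) (rule Gd_lin)



definition hu :: "real^'n^'n \<Rightarrow> real^'n^'n \<Rightarrow> 'n::finite \<Rightarrow> 'n \<Rightarrow> real" where
  "hu g h b k = (\<Sum>l\<in>UNIV. ginv g k l * h $ b $ l)"
definition vv :: "real^'n^'n \<Rightarrow> real^'n^'n \<Rightarrow> real^'n \<Rightarrow> 'n::finite \<Rightarrow> real" where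
  "vv g h \<xi> b = (\<Sum>l\<in>UNIV. raise g \<xi> l * h $ l $ b)"
definition ss :: "real^'n^'n \<Rightarrow> real^'n^'n \<Rightarrow> real^'n::finite \<Rightarrow> real" where
  "ss g h \<xi> = (\<Sum>b\<in>UNIV. raise g \<xi> b * vv g h \<xi> b)"

lemmas merge = sum_distrib_left sum_distrib_right sum.distrib[symmetric] sum_subtractf[symmetric] sum_negf[symmetric]

lemma L1: "dChrL g (\<lambda>a b c d. - (\<xi> $ c * \<xi> $ d * h $ a $ b)) k a b c
  = -(1/2) * \<xi> $ c * (\<xi> $ a * hu g h b k + \<xi> $ b * hu g h a k - raise g \<xi> k * h $ a $ b)"
  unfolding dChrL_def hu_def raise_def
  apply (simp only: merge)
  by (rule sum.cong) (auto simp: algebra_simps)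

lemma L2: "RuL g (\<lambda>a b c d. - (\<xi> $ c * \<xi> $ d * h $ a $ b)) a b c d
  = -(1/2) * (\<xi>$a * \<xi>$c * hu g h b d - \<xi>$a * raise g \<xi> d * h$b$c
              - \<xi>$b * \<xi>$c * hu g h a d + \<xi>$b * raise g \<xi> d * h$a$c)"
  unfolding RuL_def L1 by (simp add: algebra_simps)

context
  fixes g h :: "real^'n::finite^'n" and \<xi> :: "real^'n"
  assumes gs: "transpose g = g" and gd: "det g = 1" and hs: "transpose h = h"
    and ht: "(\<Sum>a\<in>UNIV. \<Sum>b\<in>UNIV. ginv g a b * h $ a $ b) = 0"
begin

lemma gsym: "g $ a $ b = g $ b $ a" using arg_cong[OF gs, of "\<lambda>M. M $ b $ a"] by (simp add: transpose_def)
lemma hsym: "h $ a $ b = h $ b $ a" using arg_cong[OF hs, of "\<lambda>M. M $ b $ a"] by (simp add: transpose_def)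
lemma gisym: "ginv g a b = ginv g b a" using ginv_sym[OF gs gd] .

lemma lower: "(\<Sum>e\<in>UNIV. (\<Sum>l\<in>UNIV. ginv g e l * f l) * g$e$d) = f d"
proof -
  have "(\<Sum>e\<in>UNIV. (\<Sum>l\<in>UNIV. ginv g e l * f l) * g$e$d) = (\<Sum>l\<in>UNIV. f l * (\<Sum>e\<in>UNIV. ginv g l e * g$e$d))"
    apply (simp only: sum_distrib_right sum_distrib_left)
    apply (subst sum.swap) by (intro sum.cong refl) (simp add: gisym ac_simps)
  also have "\<dots> = (\<Sum>l\<in>UNIV. if l = d then f l else 0)"
    by (rule sum.cong) (auto simp: ginv_left[OF gs gd])
  also have "\<dots> = f d" by simp
  finally show ?thesis .
qed

lemma P1: "(\<Sum>e\<in>UNIV. raise g \<xi> e * g$e$d) = \<xi> $ d"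
  unfolding raise_def by (rule lower)
lemma P1b: "(\<Sum>e\<in>UNIV. hu g h b e * g$e$d) = h $ b $ d"
  unfolding hu_def by (rule lower)
lemma P1c: "(\<Sum>e\<in>UNIV. raise g \<xi> e * g$d$e) = \<xi> $ d"
  by (subst gsym) (rule P1)

lemma P2: "(\<Sum>a\<in>UNIV. \<xi> $ a * hu g h b a) = vv g h \<xi> b"
  unfolding hu_def vv_def raise_def
  apply (simp only: sum_distrib_right sum_distrib_left)
  apply (subst sum.swap) by (intro sum.cong refl) (simp add: gisym hsym ac_simps)

lemma P3: "(\<Sum>a\<in>UNIV. \<xi> $ a * raise g \<xi> a) = gnorm2 g \<xi>"
  unfolding gnorm2_def raise_def
  apply (simp only: sum_distrib_right sum_distrib_left)
  by (intro sum.cong refl) (simp add: algebra_simps)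
lemma P3b: "(\<Sum>a\<in>UNIV. raise g \<xi> a * \<xi> $ a) = gnorm2 g \<xi>"
  using P3 by (simp add: mult.commute)

lemma P4: "(\<Sum>a\<in>UNIV. hu g h a a) = 0"
  unfolding hu_def using ht by (simp add: hsym)

lemma P5: "(\<Sum>a\<in>UNIV. raise g \<xi> a * h$a$c) = vv g h \<xi> c" unfolding vv_def ..
lemma P5b: "(\<Sum>a\<in>UNIV. raise g \<xi> a * h$c$a) = vv g h \<xi> c" unfolding vv_def by (simp add: hsym)
lemma P6: "(\<Sum>a\<in>UNIV. raise g \<xi> a * vv g h \<xi> a) = ss g h \<xi>" unfolding ss_def ..

lemma P7: "(\<Sum>b\<in>UNIV. \<Sum>c\<in>UNIV. ginv g b c * \<xi> $ c * f b) = (\<Sum>b\<in>UNIV. raise g \<xi> b * f b)"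
  unfolding raise_def
  by (simp only: sum_distrib_right sum_distrib_left)
lemma P7b: "(\<Sum>b\<in>UNIV. \<Sum>c\<in>UNIV. ginv g b c * \<xi> $ b * f c) = (\<Sum>b\<in>UNIV. raise g \<xi> b * f b)"
  unfolding raise_def
  apply (simp only: sum_distrib_right sum_distrib_left)
  apply (subst sum.swap) by (intro sum.cong refl) (simp add: gisym ac_simps)

abbreviation "X0 \<equiv> (\<lambda>a b c d. - (\<xi> $ c * \<xi> $ d * h $ a $ b))"

lemma L3: "RL g X0 a b c d = -(1/2) * (\<xi>$a * \<xi>$c * h$b$d - \<xi>$a * \<xi>$d * h$b$c
              - \<xi>$b * \<xi>$c * h$a$d + \<xi>$b * \<xi>$d * h$a$c)"
proof -
  have "RL g X0 a b c d = -(1/2) * (\<xi>$a * \<xi>$c * (\<Sum>e\<in>UNIV. hu g h b e * g$e$d)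
     - \<xi>$a * h$b$c * (\<Sum>e\<in>UNIV. raise g \<xi> e * g$e$d)
     - \<xi>$b * \<xi>$c * (\<Sum>e\<in>UNIV. hu g h a e * g$e$d) + \<xi>$b * h$a$c * (\<Sum>e\<in>UNIV. raise g \<xi> e * g$e$d))"
    unfolding RL_def L2 apply (simp only: merge)
    by (rule sum.cong) (auto simp: algebra_simps)
  then show ?thesis by (simp add: P1 P1b)
qed

lemma L4: "RicL g X0 b c = -(1/2) * (\<xi>$c * vv g h \<xi> b + \<xi>$b * vv g h \<xi> c - gnorm2 g \<xi> * h$b$c)"
proof -
  have "RicL g X0 b c = -(1/2) * (\<xi>$c * (\<Sum>a\<in>UNIV. \<xi> $ a * hu g h b a)
     - h$b$c * (\<Sum>a\<in>UNIV. \<xi> $ a * raise g \<xi> a)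
     - \<xi>$b * \<xi>$c * (\<Sum>a\<in>UNIV. hu g h a a) + \<xi>$b * (\<Sum>a\<in>UNIV. raise g \<xi> a * h$a$c))"
    unfolding RicL_def L2 apply (simp only: merge)
    by (rule sum.cong) (auto simp: algebra_simps)
  then show ?thesis by (simp add: P2 P3 P4 P5 algebra_simps)
qed

lemma L5: "ScalL g X0 = - ss g h \<xi>"
proof -
  have "ScalL g X0 = -(1/2) * ((\<Sum>b\<in>UNIV. \<Sum>c\<in>UNIV. ginv g b c * \<xi> $ c * vv g h \<xi> b)
     + (\<Sum>b\<in>UNIV. \<Sum>c\<in>UNIV. ginv g b c * \<xi> $ b * vv g h \<xi> c)
     - gnorm2 g \<xi> * (\<Sum>b\<in>UNIV. \<Sum>c\<in>UNIV. ginv g b c * h $ b $ c))"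
    unfolding ScalL_def L4 apply (simp only: merge)
    by (intro sum.cong refl) (simp add: algebra_simps)
  then show ?thesis by (simp add: P7 P7b ht P6)
qed

end


context
  fixes g h :: "real^'n::finite^'n" and \<xi> :: "real^'n"
  assumes gs: "transpose g = g" and gd: "det g = 1" and hs: "transpose h = h"
    and ht: "(\<Sum>a\<in>UNIV. \<Sum>b\<in>UNIV. ginv g a b * h $ a $ b) = 0"
  fixes k1 k2 :: real
  assumes k1def: "k1 = 1/(real CARD('n)-2)" and k2def: "k2 = ss g h \<xi>/(2*(real CARD('n)-1))"
begin

lemmas PP = P1[OF gs gd hs ht] P1b[OF gs gd hs ht] P1c[OF gs gd hs ht] P2[OF gs gd hs ht]
  P3[OF gs gd hs ht] P3b[OF gs gd hs ht] P4[OF gs gd hs ht] P5[OF gs gd hs ht] P5b[OF gs gd hs ht]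
  P6[OF gs gd hs ht]

abbreviation "N \<equiv> gnorm2 g \<xi>"
abbreviation "S \<equiv> ss g h \<xi>"
abbreviation "V \<equiv> vv g h \<xi>"
abbreviation "xu \<equiv> raise g \<xi>"

definition "PcW x y = k1 * (-(1/2)*(\<xi>$y * V x + \<xi>$x * V y - N*h$x$y) + k2 * g$x$y)"

lemma Sch_c: "SchL g (\<lambda>a b c d. - (\<xi> $ c * \<xi> $ d * h $ a $ b)) x y = PcW x y"
  unfolding SchL_def PcW_def L4[OF gs gd hs ht] L5[OF gs gd hs ht] by (simp add: algebra_simps k1def k2def)

lemma W_c: "WL g (\<lambda>a b c d. - (\<xi> $ c * \<xi> $ d * h $ a $ b)) a b c d =
  -(1/2) * (\<xi>$a * \<xi>$c * h$b$d - \<xi>$a * \<xi>$d * h$b$c - \<xi>$b * \<xi>$c * h$a$d + \<xi>$b * \<xi>$d * h$a$c)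
  + PcW a c * g$b$d - PcW b c * g$a$d + PcW b d * g$a$c - PcW a d * g$b$c"
  unfolding WL_def Sch_c L3[OF gs gd hs ht] ..

definition "QW x = k1 * (-(1/2)*(N * V x + \<xi>$x * S - N * V x) + k2 * \<xi>$x)"

lemma Dstep: "(\<Sum>d\<in>UNIV. xu d * WL g (\<lambda>a b c d. - (\<xi> $ c * \<xi> $ d * h $ a $ b)) a b c d) =
  -(1/2) * (\<xi>$a * \<xi>$c * V b - \<xi>$a * N * h$b$c - \<xi>$b * \<xi>$c * V a + \<xi>$b * N * h$a$c)
  + PcW a c * \<xi>$b - PcW b c * \<xi>$a + g$a$c * QW b - g$b$c * QW a"
proof -
  have "(\<Sum>d\<in>UNIV. xu d * WL g (\<lambda>a b c d. - (\<xi> $ c * \<xi> $ d * h $ a $ b)) a b c d) =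
    -(1/2) * (\<xi>$a * \<xi>$c * (\<Sum>d\<in>UNIV. xu d * h$b$d) - \<xi>$a * h$b$c * (\<Sum>d\<in>UNIV. xu d * \<xi>$d)
       - \<xi>$b * \<xi>$c * (\<Sum>d\<in>UNIV. xu d * h$a$d) + \<xi>$b * h$a$c * (\<Sum>d\<in>UNIV. xu d * \<xi>$d))
    + PcW a c * (\<Sum>d\<in>UNIV. xu d * g$b$d) - PcW b c * (\<Sum>d\<in>UNIV. xu d * g$a$d)
    + g$a$c * (k1 * (-(1/2)*((\<Sum>d\<in>UNIV. xu d * \<xi>$d) * V b + \<xi>$b * (\<Sum>d\<in>UNIV. xu d * V d)
          - N*(\<Sum>d\<in>UNIV. xu d * h$b$d)) + k2 * (\<Sum>d\<in>UNIV. xu d * g$b$d)))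
    - g$b$c * (k1 * (-(1/2)*((\<Sum>d\<in>UNIV. xu d * \<xi>$d) * V a + \<xi>$a * (\<Sum>d\<in>UNIV. xu d * V d)
          - N*(\<Sum>d\<in>UNIV. xu d * h$a$d)) + k2 * (\<Sum>d\<in>UNIV. xu d * g$a$d)))"
    unfolding W_c PcW_def apply (simp only: merge)
    by (intro sum.cong refl) (simp add: algebra_simps)
  then show ?thesis unfolding QW_def by (simp add: PP)
qed

lemma Astep: "(\<Sum>a\<in>UNIV. \<Sum>d\<in>UNIV. xu a * xu d * WL g (\<lambda>a b c d. - (\<xi> $ c * \<xi> $ d * h $ a $ b)) a b c d) =
  -(1/2) * (\<xi>$c * V b * N - N * h$b$c * N - \<xi>$b * \<xi>$c * S + \<xi>$b * N * V c)
  + \<xi>$b * (k1 * (-(1/2)*(\<xi>$c * S + V c * N - N * V c) + k2 * \<xi>$c))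
  - PcW b c * N + QW b * \<xi>$c
  - g$b$c * (k1 * (-(1/2)*(N * S + S * N - N * S) + k2 * N))"
proof -
  have "(\<Sum>a\<in>UNIV. \<Sum>d\<in>UNIV. xu a * xu d * WL g (\<lambda>a b c d. - (\<xi> $ c * \<xi> $ d * h $ a $ b)) a b c d)
    = (\<Sum>a\<in>UNIV. xu a * (\<Sum>d\<in>UNIV. xu d * WL g (\<lambda>a b c d. - (\<xi> $ c * \<xi> $ d * h $ a $ b)) a b c d))"
    by (simp add: sum_distrib_left mult.assoc)
  also have "\<dots> = -(1/2) * (\<xi>$c * V b * (\<Sum>a\<in>UNIV. xu a * \<xi>$a) - N * h$b$c * (\<Sum>a\<in>UNIV. xu a * \<xi>$a)
       - \<xi>$b * \<xi>$c * (\<Sum>a\<in>UNIV. xu a * V a) + \<xi>$b * N * (\<Sum>a\<in>UNIV. xu a * h$a$c))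
    + \<xi>$b * (k1 * (-(1/2)*(\<xi>$c * (\<Sum>a\<in>UNIV. xu a * V a) + V c * (\<Sum>a\<in>UNIV. xu a * \<xi>$a)
         - N * (\<Sum>a\<in>UNIV. xu a * h$a$c)) + k2 * (\<Sum>a\<in>UNIV. xu a * g$a$c)))
    - PcW b c * (\<Sum>a\<in>UNIV. xu a * \<xi>$a) + QW b * (\<Sum>a\<in>UNIV. xu a * g$a$c)
    - g$b$c * (k1 * (-(1/2)*(N * (\<Sum>a\<in>UNIV. xu a * V a) + S * (\<Sum>a\<in>UNIV. xu a * \<xi>$a)
         - N * (\<Sum>a\<in>UNIV. xu a * V a)) + k2 * (\<Sum>a\<in>UNIV. xu a * \<xi>$a)))"
    unfolding Dstep PcW_def[of _ c] QW_def[of _] apply (simp only: merge)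
    by (intro sum.cong refl) (simp add: algebra_simps)
  finally show ?thesis by (simp add: PP)
qed


lemma Astep': "(\<Sum>a\<in>UNIV. \<Sum>d\<in>UNIV. xu a * xu d * WL g (\<lambda>a b c d. - (\<xi> $ c * \<xi> $ d * h $ a $ b)) a b c d) =
  -(1/2) * (\<xi>$c * V b * N - N * h$b$c * N - \<xi>$b * \<xi>$c * S + \<xi>$b * N * V c)
  + \<xi>$b * (k1 * (-(1/2)*(\<xi>$c * S + V c * N - N * V c) + k2 * \<xi>$c))
  - (k1 * (-(1/2)*(\<xi>$c * V b + \<xi>$b * V c - N*h$b$c) + k2 * g$b$c)) * N
  + (k1 * (-(1/2)*(N * V b + \<xi>$b * S - N * V b) + k2 * \<xi>$b)) * \<xi>$c
  - g$b$c * (k1 * (-(1/2)*(N * S + S * N - N * S) + k2 * N))"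
  using Astep unfolding PcW_def QW_def .

lemma Gu_c: "GuL g (\<lambda>a b c. \<xi> $ c * h $ a $ b) k = (\<Sum>b\<in>UNIV. xu b * hu g h b k)"
proof -
  have "GuL g (\<lambda>a b c. \<xi> $ c * h $ a $ b) k = (1/2) * ((\<Sum>a\<in>UNIV. \<Sum>b\<in>UNIV. ginv g a b * \<xi> $ a * hu g h b k)
     + (\<Sum>a\<in>UNIV. \<Sum>b\<in>UNIV. ginv g a b * \<xi> $ b * hu g h a k)
     - xu k * (\<Sum>a\<in>UNIV. \<Sum>b\<in>UNIV. ginv g a b * h $ a $ b))"
    unfolding GuL_def ChrL_def hu_def raise_def apply (simp only: merge)
    by (intro sum.cong refl) (simp add: algebra_simps)
  then show ?thesis by (simp add: P7[OF gs gd hs ht] P7b[OF gs gd hs ht] ht)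
qed

lemma Gu_s: "(\<Sum>l\<in>UNIV. \<xi> $ l * GuL g (\<lambda>a b c. \<xi> $ c * h $ a $ b) l) = S"
proof -
  have "(\<Sum>l\<in>UNIV. \<xi> $ l * GuL g (\<lambda>a b c. \<xi> $ c * h $ a $ b) l) = (\<Sum>b\<in>UNIV. xu b * (\<Sum>l\<in>UNIV. \<xi> $ l * hu g h b l))"
    unfolding Gu_c apply (simp only: sum_distrib_left)
    apply (subst sum.swap) by (intro sum.cong refl) (simp add: ac_simps)
  then show ?thesis by (simp add: PP)
qed

lemma Gd_c: "(\<Sum>m\<in>UNIV. g $ l $ m * GuL g (\<lambda>a b c. \<xi> $ c * h $ a $ b) m) = V l"
proof -
  have "(\<Sum>m\<in>UNIV. g $ l $ m * GuL g (\<lambda>a b c. \<xi> $ c * h $ a $ b) m) = (\<Sum>b\<in>UNIV. xu b * (\<Sum>m\<in>UNIV. hu g h b m * g $ m $ l))"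
    unfolding Gu_c apply (simp only: sum_distrib_left)
    apply (subst sum.swap) by (intro sum.cong refl) (simp add: ac_simps gsym[OF gs gd hs ht])
  then show ?thesis by (simp add: PP)
qed

end


lemma fin_alg:
  fixes n N S Vb Vc eb ec hbc gbc k1 k2 :: real
  assumes n: "n \<ge> 3" and k1: "k1 = 1/(n-2)" and k2: "k2 = S/(2*(n-1))"
  shows "-(1/2) * (ec * Vb * N - N * hbc * N - eb * ec * S + eb * N * Vc)
  + eb * (k1 * (-(1/2)*(ec * S + Vc * N - N * Vc) + k2 * ec))
  - (k1 * (-(1/2)*(ec * Vb + eb * Vc - N*hbc) + k2 * gbc)) * N + (k1 * (-(1/2)*(N * Vb + eb * S - N * Vb) + k2 * eb)) * ec
  - gbc * (k1 * (-(1/2)*(N * S + S * N - N * S) + k2 * N))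
  = (n - 3) / (2 * (n - 2)) * (N^2 * hbc - N * (eb * Vc + ec * Vb) + (n-2)/(n-1) * eb * ec * S + 1/(n-1) * N * S * gbc)"
  (is "?L = ?R")
proof -
  define k3 where "k3 = 1/(n-1)"
  have a: "n - 2 \<noteq> 0" "n - 1 \<noteq> 0" using n by auto
  have e2: "k2 = S * k3 / 2" using k2 k3_def by simp
  have r1: "(n - 3) / (2 * (n - 2)) = (n-3) * k1 / 2" using k1 by simp
  have r2: "(n-2)/(n-1) = (n-2) * k3" "1/(n-1) = k3" using k3_def by simp_all
  have L: "?L = ((1-k1)/2) * (N^2*hbc) + ((k1-1)/2) * (N*eb*Vc + N*ec*Vb) + (1/2 - k1 + k1*k3) * (eb*ec*S)
     + (k1/2 - k1*k3) * (gbc*N*S)"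
    unfolding e2 by (simp add: field_simps power2_eq_square)
  have R: "?R = ((n-3)*k1/2) * (N^2*hbc) + (-(n-3)*k1/2) * (N*eb*Vc + N*ec*Vb) + ((n-3)*k1/2*((n-2)*k3)) * (eb*ec*S)
     + ((n-3)*k1/2*k3) * (gbc*N*S)"
    unfolding r1 r2 by (simp add: field_simps power2_eq_square)
  obtain p q where pq: "p = n - 2" "q = n - 1" by blast
  have pq0: "p \<noteq> 0" "q \<noteq> 0" using a pq by auto
  have np: "n = p + 2" "q = p + 1" using pq by auto
  have kk: "k1 = 1/p" "k3 = 1/q" using pq k1 k3_def by auto
  have c1: "(1-k1)/2 = (n-3)*k1/2" "(k1-1)/2 = -(n-3)*k1/2" "1/2 - k1 + k1*k3 = (n-3)*k1/2*((n-2)*k3)"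
     "k1/2 - k1*k3 = (n-3)*k1/2*k3"
    unfolding kk using pq0 by (simp_all add: field_simps) (simp_all add: np algebra_simps)
  show ?thesis unfolding L R c1 ..
qed

theorem lemma3p2:
  fixes g h :: "real^'n^'n" and G1 :: "'n::finite jet1" and G2 :: "'n jet2"
    and \<xi> :: "real^'n"
  assumes dim: "CARD('n) \<ge> 3"
    and g_sym: "transpose g = g"
    and g_pos: "\<And>v. v \<noteq> 0 \<Longrightarrow> v \<bullet> (g *v v) > 0"
    and g_det: "det g = 1"
    and G1_sym: "\<And>a b c. G1 a b c = G1 b a c"
    and G2_sym: "\<And>a b c d. G2 a b c d = G2 b a c d \<and> G2 a b c d = G2 a b d c"
    and h_sym: "transpose h = h"
    and h_tangent: "(\<Sum>a\<in>UNIV. \<Sum>b\<in>UNIV. ginv g a b * h $ a $ b) = 0"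
  shows "\<forall>b c.
    (\<Sum>a\<in>UNIV. \<Sum>d\<in>UNIV. raise g \<xi> a * raise g \<xi> d *
        psym2 (\<lambda>g' G1' G2'. Weyl g' G1' G2' a b c d) g G1 G2 \<xi> h)
    = (real CARD('n) - 3) / (2 * (real CARD('n) - 2)) *
      ( (gnorm2 g \<xi>)^2 * h $ b $ c
        - gnorm2 g \<xi> * (\<xi> $ b * psym1_negi (\<lambda>g' G1'. Gam_down g' G1' c) g G1 \<xi> h
                        + \<xi> $ c * psym1_negi (\<lambda>g' G1'. Gam_down g' G1' b) g G1 \<xi> h)
        + (real CARD('n) - 2) / (real CARD('n) - 1) * \<xi> $ b * \<xi> $ c *
            (\<Sum>l\<in>UNIV. \<xi> $ l * psym1_negi (\<lambda>g' G1'. Gam_up g' G1' l) g G1 \<xi> h)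
        + 1 / (real CARD('n) - 1) * gnorm2 g \<xi> *
            (\<Sum>l\<in>UNIV. \<xi> $ l * psym1_negi (\<lambda>g' G1'. Gam_up g' G1' l) g G1 \<xi> h) * g $ b $ c )"
  proof (intro allI)
  fix b c
  note A = Astep'[OF g_sym g_det h_sym h_tangent refl refl]
  note G1 = Gd_c[OF g_sym g_det h_sym h_tangent refl refl]
  note G2 = Gu_s[OF g_sym g_det h_sym h_tangent refl refl]
  have n3: "real CARD('n) \<ge> 3" using dim by simp
  show "(\<Sum>a\<in>UNIV. \<Sum>d\<in>UNIV. raise g \<xi> a * raise g \<xi> d *
        psym2 (\<lambda>g' G1' G2'. Weyl g' G1' G2' a b c d) g G1 G2 \<xi> h)
    = (real CARD('n) - 3) / (2 * (real CARD('n) - 2)) *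
      ( (gnorm2 g \<xi>)^2 * h $ b $ c
        - gnorm2 g \<xi> * (\<xi> $ b * psym1_negi (\<lambda>g' G1'. Gam_down g' G1' c) g G1 \<xi> h
                        + \<xi> $ c * psym1_negi (\<lambda>g' G1'. Gam_down g' G1' b) g G1 \<xi> h)
        + (real CARD('n) - 2) / (real CARD('n) - 1) * \<xi> $ b * \<xi> $ c *
            (\<Sum>l\<in>UNIV. \<xi> $ l * psym1_negi (\<lambda>g' G1'. Gam_up g' G1' l) g G1 \<xi> h)
        + 1 / (real CARD('n) - 1) * gnorm2 g \<xi> *
            (\<Sum>l\<in>UNIV. \<xi> $ l * psym1_negi (\<lambda>g' G1'. Gam_up g' G1' l) g G1 \<xi> h) * g $ b $ c )"
    unfolding psymW psymGd psymGu G1 G2 A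
    by (rule fin_alg[OF n3 refl refl])
qed


end
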